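(* Let $\chi$ be a character of type $\langle l,m\rangle$ with standard expansion $$\chi=x_l\mathfrak{Z}_l+\sum_{1\le j\le m,\,p\nmid j}b_j\cdot p\,\mathfrak{Z}_j,\qquad x_l,b_j\in\{0,\dots,p-1\}.$$ Then $\chi$ is strictly equivalent to the character $$x_l\mathfrak{Z}_l+\sum_{\substack{m-l\le j\le m\\ p\nmid j}}b_j\cdot p\,\mathfrak{Z}_j,$$ with the same coefficients $x_l$ and $b_j$ ($m-l\le j\le m$, $p\nmid j$) as in $\chi$.
   Context: Let $p$ be a prime, $U_1=1+t\mathbb{F}_p[[t]]$, $U_j=1+t^j\mathbb{F}_p[[t]]$, with the $t$-adic topology. The Nottingham group $\mathcal{N}$ over $\mathbb{F}_p$ is the set of power series $u(t)=t(1+c_1t+\cdots)$, $c_i\in\mathbb{F}_p$, under composition. A character is a continuous homomorphism $\chi:U_1\to\mathbb{Z}/p^2\mathbb{Z}$; $\mathcal{N}$ acts by ${}_u\chi(f(t))=\chi(f(u(t)))$. Characters $\chi,\psi$ are strictly equivalent if $\psi={}_u\chi$ for some $u\in\mathcal{N}$ with $\chi(u(t)/t)=0$. A surjective character has type $\langle l,m\rangle$ where $l$ is the largest $b$ with $\chi(U_b)\not\subset p\mathbb{Z}/p^2\mathbb{Z}$ and $m$ the largest $b$ with $\chi(U_b)\ne0$. Put $E_j=1+t^j$; the $E_j$ with $p\nmid j$ form a topological $\mathbb{Z}_p$-basis of $U_1$, and for $p\nmid j$, $\mathfrak{Z}_j$ is the character with $\mathfrak{Z}_j(E_i)=\delta_{ij}$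 for $p\nmid i$ (so a character is determined by its values on the $E_i$, $p\nmid i$). *)

theory Defs
  imports "HOL-Analysis.Analysis" "HOL-Computational_Algebra.Formal_Power_Series"
begin

text \<open>The field F_p is modelled by a finite field type 'a with CARD('a) = p prime.
  Power series are 'a fps with the t-adic metric topology of the library.
  Z/p^2Z is modelled by the integers {0..<p^2} with addition mod p^2
  (the integers carry the discrete topology).\<close>

definition U1 :: "'a::field fps set" where
  "U1 = {f. fps_nth f 0 = 1}"

definition Uj :: "nat \<Rightarrow> 'a::field fps set" where
  "Uj j = {f. fps_nth f 0 = 1 \<and> (\<forall>i. 0 < i \<and> i < j \<longrightarrow> fps_nth f i = 0)}"

definition Ej :: "nat \<Rightarrow> 'a::field fps" where
  "Ej j = 1 + fps_X ^ j"

definition nottingham :: "'a::field fps set" where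
  "nottingham = {u. fps_nth u 0 = 0 \<and> fps_nth u 1 = 1}"

definition is_character :: "nat \<Rightarrow> ('a::field fps \<Rightarrow> int) \<Rightarrow> bool" where
  "is_character p chi \<longleftrightarrow>
     (\<forall>f\<in>U1. chi f \<in> {0..<int p ^ 2}) \<and>
     (\<forall>f\<in>U1. \<forall>g\<in>U1. chi (f * g) = (chi f + chi g) mod (int p ^ 2)) \<and>
     continuous_on U1 chi"

definition nott_act :: "'a::field fps \<Rightarrow> ('a fps \<Rightarrow> int) \<Rightarrow> ('a fps \<Rightarrow> int)" where
  "nott_act u chi = (\<lambda>f. chi (fps_compose f u))"

definition strictly_equivalent :: "('a::field fps \<Rightarrow> int) \<Rightarrow> ('a fps \<Rightarrow> int) \<Rightarrow> bool" where
  "strictly_equivalent chi psi \<longleftrightarrow>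
     (\<exists>u\<in>nottingham. chi (fps_shift 1 u) = 0 \<and> (\<forall>f\<in>U1. psi f = nott_act u chi f))"

definition has_type :: "nat \<Rightarrow> ('a::field fps \<Rightarrow> int) \<Rightarrow> nat \<Rightarrow> nat \<Rightarrow> bool" where
  "has_type p chi l m \<longleftrightarrow>
     is_character p chi \<and> chi ` U1 = {0..<int p ^ 2} \<and>
     (\<exists>f\<in>Uj l. \<not> int p dvd chi f) \<and> (\<forall>b>l. \<forall>f\<in>Uj b. int p dvd chi f) \<and>
     (\<exists>f\<in>Uj m. chi f \<noteq> 0) \<and> (\<forall>b>m. \<forall>f\<in>Uj b. chi f = 0)"

end

theory Submission
  imports Defs "HOL-Number_Theory.Number_Theory"
begin
unbundle no vec_syntax
unbundle fps_syntax


definition agree :: "nat \<Rightarrow> 'a::field fps \<Rightarrow> 'a fps \<Rightarrow> bool" where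
  "agree N f g \<longleftrightarrow> (\<forall>i<N. f $ i = g $ i)"

lemma agree_refl[simp]: "agree N f f" by (simp add: agree_def)
lemma agree_sym: "agree N f g \<Longrightarrow> agree N g f" by (simp add: agree_def)
lemma agree_trans: "agree N f g \<Longrightarrow> agree N g h \<Longrightarrow> agree N f h" by (simp add: agree_def)
lemma agree_mono: "agree N f g \<Longrightarrow> M \<le> N \<Longrightarrow> agree M f g" by (simp add: agree_def)

lemma agree_mult:
  assumes "agree N a a'" "agree N b b'" shows "agree N (a*b) (a'*b')"
  unfolding agree_def
proof (intro allI impI)
  fix n assume n: "n < N"
  show "(a*b) $ n = (a'*b') $ n" unfolding fps_mult_nth
  proof (rule sum.cong)
    fix i assume "i \<in> {0..n}"
    then have "i < N" "n - i < N" using n by auto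
    then show "a $ i * b $ (n - i) = a' $ i * b' $ (n - i)" using assms by (simp add: agree_def)
  qed simp
qed

lemma agree_add:
  assumes "agree N a a'" "agree N b b'" shows "agree N (a+b) (a'+b')"
  using assms by (simp add: agree_def)

lemma agree_compose:
  assumes "agree N a b" shows "agree N (a oo w) (b oo w)"
  unfolding agree_def
proof (intro allI impI)
  fix n assume n: "n < N"
  show "(a oo w) $ n = (b oo w) $ n" unfolding fps_compose_nth
  proof (rule sum.cong)
    fix i assume "i \<in> {0..n}"
    then have "i < N" using n by auto
    then show "a $ i * (w^i) $ n = b $ i * (w^i) $ n" using assms by (simp add: agree_def)
  qed simp
qed

lemma agree_Xpow:
  assumes "agree N a b" shows "agree (N+J) (fps_X^J * a) (fps_X^J * b)"
  using assms unfolding agree_def by (auto simp: fps_X_power_mult_nth)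

lemma agree_Xpow_high:
  assumes "N \<le> K" shows "agree N (a + fps_X^K * b) a"
  using assms unfolding agree_def by (auto simp: fps_X_power_mult_nth)

lemma Uj_iff: "f \<in> Uj N \<longleftrightarrow> f $ 0 = 1 \<and> agree N f 1"
  unfolding Uj_def agree_def by auto

lemma U1_eq: "U1 = Uj 0" unfolding U1_def Uj_def by auto

lemma U1_iff: "f \<in> U1 \<longleftrightarrow> f $ 0 = 1" unfolding U1_def by auto

lemma Uj_U1: "f \<in> Uj N \<Longrightarrow> f \<in> U1" unfolding U1_def Uj_def by auto

lemma Uj_mono: "f \<in> Uj N \<Longrightarrow> M \<le> N \<Longrightarrow> f \<in> Uj M"
  unfolding Uj_iff using agree_mono by blast

lemma Uj_mult: "f \<in> Uj N \<Longrightarrow> g \<in> Uj N \<Longrightarrow> f*g \<in> Uj N"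
  unfolding Uj_iff using agree_mult[of N f 1 g 1] by auto

lemma Uj_pow: "f \<in> Uj N \<Longrightarrow> f^n \<in> Uj N"
proof (induction n)
  case 0 then show ?case by (simp add: Uj_iff)
next
  case (Suc n) then show ?case using Uj_mult by (simp add: mult.commute)
qed

lemma U1_mult: "f \<in> U1 \<Longrightarrow> g \<in> U1 \<Longrightarrow> f*g \<in> U1" by (simp add: U1_iff)
lemma U1_pow: "f \<in> U1 \<Longrightarrow> f^n \<in> U1" using Uj_pow U1_eq by blast

lemma Ej_Uj: "1 \<le> i \<Longrightarrow> (Ej i :: 'a::field fps) \<in> Uj i"
  unfolding Uj_iff agree_def Ej_def by auto

lemma Ej_U1: "1 \<le> i \<Longrightarrow> (Ej i :: 'a::field fps) \<in> U1"
  using Ej_Uj Uj_U1 by blast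

lemma ratio:
  fixes f g :: "'a::field fps"
  assumes "f \<in> U1" "g \<in> U1" "agree N f g"
  shows "g * inverse f \<in> Uj N" "f * (g * inverse f) = g"
proof -
  have f0: "f $ 0 \<noteq> 0" using assms by (simp add: U1_iff)
  have "agree N (g * inverse f) (f * inverse f)"
    using agree_mult[OF agree_sym[OF assms(3)] agree_refl] .
  moreover have "f * inverse f = 1" using inverse_mult_eq_1'[OF f0] .
  ultimately show "g * inverse f \<in> Uj N" using assms by (simp add: Uj_iff U1_iff)
  show "f * (g * inverse f) = g" using inverse_mult_eq_1'[OF f0]
    by (metis mult.commute mult.left_commute mult_1_right)
qed



definition hom :: "nat \<Rightarrow> ('a::field fps \<Rightarrow> int) \<Rightarrow> bool" where
  "hom p phi \<longleftrightarrow> (\<forall>f\<in>U1. phi f \<in> {0..<int p ^ 2}) \<and>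
     (\<forall>f\<in>U1. \<forall>g\<in>U1. phi (f*g) = (phi f + phi g) mod (int p ^ 2))"

lemma char_hom: "is_character p chi \<Longrightarrow> hom p chi"
  unfolding is_character_def hom_def by blast

lemma hom_range: "hom p phi \<Longrightarrow> f \<in> U1 \<Longrightarrow> 0 \<le> phi f \<and> phi f < int p ^ 2"
  unfolding hom_def by auto

lemma hom_mult: "hom p phi \<Longrightarrow> f \<in> U1 \<Longrightarrow> g \<in> U1 \<Longrightarrow> phi (f*g) = (phi f + phi g) mod (int p ^ 2)"
  unfolding hom_def by auto

lemma int_double_mod: "0 \<le> (a::int) \<Longrightarrow> a < q \<Longrightarrow> (a + a) mod q = a \<Longrightarrow> a = 0"
proof -
  assume h: "0 \<le> a" "a < q" "(a + a) mod q = a"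
  have "a + a = q * ((a + a) div q) + a" using h(3) by (metis div_mult_mod_eq mult.commute)
  then have "a = q * ((a + a) div q)" by simp
  then have "a mod q = 0" by (metis dvd_triv_left dvd_imp_mod_0)
  moreover have "a mod q = a" using h(1,2) by simp
  ultimately show "a = 0" by simp
qed

lemma hom_one: "hom p phi \<Longrightarrow> phi 1 = 0"
proof -
  assume h: "hom p phi"
  have u: "(1::'a fps) \<in> U1" by (simp add: U1_iff)
  have "phi (1*1) = (phi 1 + phi 1) mod (int p ^ 2)" using hom_mult[OF h u u] .
  then have "(phi 1 + phi 1) mod (int p ^ 2) = phi 1" by simp
  then show ?thesis using hom_range[OF h u] int_double_mod by blast
qed

lemma hom_pow: "hom p phi \<Longrightarrow> f \<in> U1 \<Longrightarrow> phi (f^n) = (int n * phi f) mod (int p ^ 2)"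
proof (induction n)
  case 0 then show ?case using hom_one by simp
next
  case (Suc n)
  have "phi (f ^ Suc n) = phi (f * f^n)" by simp
  also have "\<dots> = (phi f + phi (f^n)) mod (int p ^ 2)" using hom_mult Suc U1_pow by blast
  also have "\<dots> = (phi f + int n * phi f) mod (int p ^ 2)" using Suc by (simp add: mod_add_right_eq)
  finally show ?case by (simp add: algebra_simps)
qed

lemma hom_prod: assumes h: "hom p phi" shows "finite S \<Longrightarrow> (\<forall>s\<in>S. F s \<in> U1) \<Longrightarrow>
   phi (\<Prod>s\<in>S. F s) = (\<Sum>s\<in>S. phi (F s)) mod (int p ^ 2)"
proof (induction S rule: finite_induct)
  case empty then show ?case using hom_one[OF h] by simp
next
  case (insert s S)
  have pU: "(\<Prod>s\<in>S. F s) \<in> U1"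
    using insert(4) by (induction S rule: infinite_finite_induct) (auto simp: U1_iff)
  have "phi (\<Prod>s\<in>insert s S. F s) = phi (F s * (\<Prod>s\<in>S. F s))" using insert by simp
  also have "\<dots> = (phi (F s) + phi (\<Prod>s\<in>S. F s)) mod (int p ^ 2)"
    using hom_mult[OF h] insert pU by blast
  also have "\<dots> = (phi (F s) + (\<Sum>s\<in>S. phi (F s))) mod (int p ^ 2)"
    using insert by (simp add: mod_add_right_eq)
  finally show ?case using insert by simp
qed

lemma hom_agree:
  assumes "hom p phi" "f \<in> U1" "g \<in> U1" "agree N f g" "\<forall>h\<in>Uj N. phi h = 0"
  shows "phi g = phi f"
proof -
  let ?h = "g * inverse f"
  have h: "?h \<in> Uj N" "f * ?h = g" using ratio[OF assms(2,3,4)] by auto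
  have "phi g = (phi f + phi ?h) mod (int p ^ 2)" using hom_mult[OF assms(1) assms(2) Uj_U1[OF h(1)]] h(2) by simp
  also have "\<dots> = phi f mod (int p ^ 2)" using assms(5) h(1) by simp
  also have "\<dots> = phi f" using hom_range[OF assms(1,2)] by simp
  finally show ?thesis .
qed

lemma hom_agree_modp:
  assumes "hom p phi" "f \<in> U1" "g \<in> U1" "agree N f g" "\<forall>h\<in>Uj N. int p dvd phi h"
  shows "[phi g = phi f] (mod int p)"
proof -
  let ?h = "g * inverse f"
  have h: "?h \<in> Uj N" "f * ?h = g" using ratio[OF assms(2,3,4)] by auto
  have e: "phi g = (phi f + phi ?h) mod (int p ^ 2)" using hom_mult[OF assms(1) assms(2) Uj_U1[OF h(1)]] h(2) by simp
  have "[(phi f + phi ?h) mod (int p ^ 2) = phi f + phi ?h] (mod int p)"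
    by (simp add: cong_def mod_mod_cancel power2_eq_square)
  moreover have "[phi f + phi ?h = phi f] (mod int p)"
  proof -
    obtain k where "phi ?h = int p * k" using assms(5) h(1) by (meson dvdE)
    then show ?thesis by (simp add: cong_def)
  qed
  ultimately show ?thesis using e cong_trans by metis
qed

lemma compose_U1: "f \<in> U1 \<Longrightarrow> f oo w \<in> U1" by (simp add: U1_iff)

lemma compose_Uj: "f \<in> Uj N \<Longrightarrow> f oo w \<in> Uj N"
  using agree_compose[of N f 1 w] by (simp add: Uj_iff)

lemma hom_compose:
  fixes w :: "'a::field fps"
  assumes "hom p phi" "w $ 0 = 0"
  shows "hom p (\<lambda>f. phi (f oo w))"
  unfolding hom_def
proof (intro conjI ballI)
  fix f assume "f \<in> (U1 :: 'a fps set)"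
  then show "phi (f oo w) \<in> {0..<int p ^ 2}" using hom_range[OF assms(1) compose_U1] by auto
next
  fix f g :: "'a fps" assume fg: "f \<in> U1" "g \<in> U1"
  have "(f * g) oo w = (f oo w) * (g oo w)" using fps_compose_mult_distrib[OF assms(2)] .
  then show "phi (f * g oo w) = (phi (f oo w) + phi (g oo w)) mod int p ^ 2"
    using hom_mult[OF assms(1) compose_U1[OF fg(1)] compose_U1[OF fg(2)]] by simp
qed

lemma Ej_compose:
  fixes v :: "'a::field fps"
  shows "Ej i oo (fps_X * v) = 1 + fps_X^i * v^i"
proof -
  have z: "(fps_X * v) $ 0 = 0" by simp
  have "Ej i oo (fps_X * v) = 1 + (fps_X^i oo (fps_X * v))"
    unfolding Ej_def by (simp add: fps_compose_add_distrib)
  also have "fps_X^i oo (fps_X * v) = (fps_X oo (fps_X * v))^i"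
    by (rule fps_compose_power[OF z, symmetric])
  also have "\<dots> = fps_X^i * v^i" using fps_X_fps_compose_startby0[OF z] by (simp add: power_mult_distrib)
  finally show ?thesis .
qed

lemma compose_chain:
  fixes v0 w0 :: "'a::field fps"
  shows "(fps_X * v0) oo (fps_X * w0) = fps_X * (w0 * (v0 oo (fps_X * w0)))"
proof -
  have z: "(fps_X * w0) $ 0 = 0" by simp
  have "(fps_X * v0) oo (fps_X * w0) = (fps_X oo (fps_X * w0)) * (v0 oo (fps_X * w0))"
    using fps_compose_mult_distrib[OF z] by simp
  then show ?thesis using fps_X_fps_compose_startby0[OF z] by (simp add: mult.assoc)
qed



lemma CHAR_eq_p:
  assumes "prime p" "CARD('a::{field,finite}) = p"
  shows "CHAR('a) = p"
proof -
  have pos: "CHAR('a) > 0" by (rule finite_imp_CHAR_pos) simp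
  have pr: "prime CHAR('a)" using prime_CHAR_semidom[OF pos] .
  have "CHAR('a) dvd p" using CHAR_dvd_CARD[where 'a='a] assms(2) by simp
  then show ?thesis using pr assms(1) by (simp add: primes_dvd_imp_eq)
qed

lemma of_nat_surj:
  assumes "prime p" "CARD('a::{field,finite}) = p"
  shows "\<exists>c. of_nat c = (y::'a)"
proof -
  have C: "CHAR('a) = p" using CHAR_eq_p[OF assms] .
  have inj: "inj_on (of_nat :: nat \<Rightarrow> 'a) {..<p}"
  proof (rule inj_onI)
    fix a b assume ab: "a \<in> {..<p}" "b \<in> {..<p}" "(of_nat a :: 'a) = of_nat b"
    show "a = b"
    proof (rule ccontr)
      assume ne: "a \<noteq> b"
      { fix a b :: nat assume lt: "a < b" "b < p" "(of_nat a :: 'a) = of_nat b"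
        have "(of_nat (b - a) :: 'a) = 0" using lt by (simp add: of_nat_diff)
        then have "CHAR('a) dvd (b - a)" using of_nat_eq_0_iff_char_dvd by blast
        then have False using lt C by (simp add: nat_dvd_not_less) }
      then show False using ab ne by (metis lessThan_iff linorder_neqE_nat)
    qed
  qed
  have "card ((of_nat :: nat \<Rightarrow> 'a) ` {..<p}) = p" using card_image[OF inj] by simp
  then have "(of_nat :: nat \<Rightarrow> 'a) ` {..<p} = UNIV"
    using card_subset_eq[of UNIV "(of_nat :: nat \<Rightarrow> 'a) ` {..<p}"] assms(2) by simp
  then show ?thesis by (metis UNIV_I imageE)
qed

lemma prod_U1: "(\<And>s. s \<in> S \<Longrightarrow> F s \<in> U1) \<Longrightarrow> prod F S \<in> U1"
  by (induction S rule: infinite_finite_induct) (auto simp: U1_iff)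

lemma Ej_frob:
  assumes "prime p" "CARD('a::{field,finite}) = p"
  shows "(Ej n :: 'a fps) ^ p = Ej (n * p)"
proof -
  have C: "CHAR('a fps) = p" using CHAR_eq_p[OF assms] by simp
  have "(1 + fps_X ^ n :: 'a fps) ^ p = 1 ^ p + (fps_X ^ n) ^ p"
    by (rule freshmans_dream) (use C assms(1) in auto)
  then show ?thesis unfolding Ej_def by (simp add: power_mult)
qed

lemma Ej_pow_agree:
  assumes "1 \<le> N"
  shows "agree (N+1) ((Ej N :: 'a::field fps) ^ c) (1 + fps_const (of_nat c) * fps_X^N)"
proof (induction c)
  case 0 then show ?case by simp
next
  case (Suc c)
  have "agree (N+1) (Ej N * Ej N ^ c) (Ej N * (1 + fps_const (of_nat c) * fps_X^N) :: 'a fps)"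
    by (rule agree_mult[OF agree_refl Suc])
  then have "agree (N+1) (Ej N ^ Suc c) ((1 + fps_X^N) * (1 + fps_const (of_nat c) * fps_X^N) :: 'a fps)"
    by (simp add: Ej_def)
  moreover have "agree (N+1) ((1 + fps_X^N) * (1 + fps_const (of_nat c) * fps_X^N))
                   (1 + fps_const (of_nat (Suc c)) * fps_X^N :: 'a fps)"
  proof -
    have e: "(1 + fps_X^N) * (1 + fps_const (of_nat c) * fps_X^N) =
          (1 + fps_const (of_nat (Suc c)) * fps_X^N) + fps_X^(N+N) * fps_const (of_nat c :: 'a)"
      by (simp add: algebra_simps power_add fps_const_add[symmetric])
    show ?thesis unfolding e by (rule agree_Xpow_high) (use assms in simp)
  qed
  ultimately show ?case using agree_trans by simp
qed

lemma Ej_pow_nth: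
  assumes "1 \<le> N"
  shows "agree (N+1) ((g::'a::field fps) * Ej N ^ c) (g + fps_X^N * (fps_const (of_nat c) * g))"
proof -
  have "agree (N+1) (g * Ej N ^ c) (g * (1 + fps_const (of_nat c) * fps_X^N))"
    using agree_mult[OF agree_refl Ej_pow_agree[OF assms]] .
  then show ?thesis by (simp add: algebra_simps)
qed

lemma gen_exists:
  assumes "prime p" "CARD('a::{field,finite}) = p"
  shows "\<forall>f\<in>(U1::'a fps set). \<exists>a. agree N f (\<Prod>n\<in>{1..<N}. Ej n ^ a n)"
proof (induction N)
  case 0 then show ?case by (simp add: agree_def)
next
  case (Suc N)
  show ?case
  proof
    fix f :: "'a fps" assume f: "f \<in> U1"
    show "\<exists>a. agree (Suc N) f (\<Prod>n\<in>{1..<Suc N}. Ej n ^ a n)"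
    proof (cases "N = 0")
      case True then show ?thesis using f by (simp add: agree_def U1_iff)
    next
      case False
      then have N1: "1 \<le> N" by simp
      obtain a where a: "agree N f (\<Prod>n\<in>{1..<N}. Ej n ^ a n)" using Suc f by blast
      define g where "g = (\<Prod>n\<in>{1..<N}. (Ej n :: 'a fps) ^ a n)"
      have gU: "g \<in> U1" unfolding g_def
        by (rule prod_U1) (use Ej_U1 U1_pow in auto)
      obtain c where c: "(of_nat c :: 'a) = f $ N - g $ N" using of_nat_surj[OF assms] by blast
      define a' where "a' = a(N := c)"
      have prodeq: "(\<Prod>n\<in>{1..<Suc N}. (Ej n :: 'a fps) ^ a' n) = g * Ej N ^ c"
      proof -
        have "{1..<Suc N} = insert N {1..<N}" using N1 by auto
        then have "(\<Prod>n\<in>{1..<Suc N}. (Ej n :: 'a fps) ^ a' n) = Ej N ^ a' N * (\<Prod>n\<in>{1..<N}. Ej n ^ a' n)"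
          by simp
        also have "(\<Prod>n\<in>{1..<N}. (Ej n :: 'a fps) ^ a' n) = g" unfolding g_def a'_def
          by (rule prod.cong) auto
        finally show ?thesis by (simp add: a'_def mult.commute)
      qed
      have h1: "agree (N+1) (g * Ej N ^ c) (g + fps_X^N * (fps_const (of_nat c) * g))"
        using Ej_pow_nth[OF N1] .
      have "agree (Suc N) f (g * Ej N ^ c)"
        unfolding agree_def
      proof (intro allI impI)
        fix i assume i: "i < Suc N"
        have "(g * Ej N ^ c) $ i = (g + fps_X^N * (fps_const (of_nat c) * g)) $ i"
          using h1 i by (simp add: agree_def)
        also have "\<dots> = f $ i"
        proof (cases "i < N")
          case True then show ?thesis using a by (simp add: agree_def g_def fps_X_power_mult_nth)
        next
          case False then have "i = N" using i by simp
          then show ?thesis using c gU by (simp add: fps_X_power_mult_nth U1_iff)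
        qed
        finally show "f $ i = (g * Ej N ^ c) $ i" by simp
      qed
      then show ?thesis using prodeq by metis
    qed
  qed
qed

lemma hom_Ej_all:
  fixes psi phi :: "'a::{field,finite} fps \<Rightarrow> int"
  assumes "prime p" "CARD('a::{field,finite}) = p" "hom p psi" "hom p phi"
    and "\<forall>n\<ge>1. \<not> p dvd n \<longrightarrow> psi (Ej n :: 'a fps) = phi (Ej n)"
  shows "n \<ge> 1 \<Longrightarrow> psi (Ej n :: 'a fps) = phi (Ej n)"
proof (induction n rule: less_induct)
  case (less n)
  show ?case
  proof (cases "p dvd n")
    case False then show ?thesis using assms(5) less by blast
  next
    case True
    then obtain n' where n': "n = n' * p" by (metis dvd_def mult.commute)
    have p1: "p > 1" using assms(1) prime_gt_1_nat by blast
    have "n' \<ge> 1" using less(2) n' by (cases n') auto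
    moreover have "n' < n" using n' p1 \<open>n' \<ge> 1\<close> by simp
    ultimately have ih: "psi (Ej n') = phi (Ej n')" using less by blast
    have E: "(Ej n :: 'a fps) = Ej n' ^ p" using Ej_frob[OF assms(1,2)] n' by simp
    have U: "(Ej n' :: 'a fps) \<in> U1" using Ej_U1 \<open>n' \<ge> 1\<close> by blast
    show ?thesis unfolding E using hom_pow[OF assms(3) U] hom_pow[OF assms(4) U] ih by simp
  qed
qed

lemma char_locally_const:
  fixes psi :: "'a::field fps \<Rightarrow> int"
  assumes "is_character p psi" "f \<in> U1"
  shows "\<exists>N. \<forall>h\<in>U1. agree N f h \<longrightarrow> psi h = psi f"
proof -
  have "continuous_on U1 psi" using assms(1) unfolding is_character_def by blast
  then have "(psi \<longlongrightarrow> psi f) (at f within U1)" using assms(2) unfolding continuous_on_def by blast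
  then have "eventually (\<lambda>h. psi h \<in> {psi f}) (at f within U1)"
    by (rule topological_tendstoD) (auto simp: open_discrete)
  then obtain d where d: "d > 0" "\<forall>h\<in>U1. h \<noteq> f \<and> dist h f < d \<longrightarrow> psi h = psi f"
    unfolding eventually_at by auto
  obtain N where N: "(1/2::real)^N < d" using real_arch_pow_inv[OF d(1), of "1/2"] by auto
  have "\<forall>h\<in>U1. agree N f h \<longrightarrow> psi h = psi f"
  proof (intro ballI impI)
    fix h assume h: "h \<in> U1" "agree N f h"
    show "psi h = psi f"
    proof (cases "h = f")
      case False
      then have nz: "h - f \<noteq> 0" by simp
      have "subdegree (h - f) \<ge> N"
        by (rule subdegree_geI[OF nz]) (use h(2) in \<open>simp add: agree_def\<close>)
      then have "inverse ((2::real) ^ subdegree (h - f)) \<le> inverse (2 ^ N)"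
        by (simp add: le_imp_inverse_le power_increasing)
      moreover have "dist h f = inverse ((2::real) ^ subdegree (h - f))" using False by (simp add: dist_fps_def)
      moreover have "inverse ((2::real) ^ N) = (1/2)^N" by (simp add: power_one_over inverse_eq_divide)
      ultimately have "dist h f < d" using N by linarith
      then show ?thesis using d h False by blast
    qed simp
  qed
  then show ?thesis by blast
qed

lemma density:
  fixes psi phi :: "'a::{field,finite} fps \<Rightarrow> int"
  assumes "prime p" "CARD('a) = p" "is_character p psi" "hom p phi"
    and "\<forall>h\<in>Uj M. phi h = 0"
    and "\<forall>n\<ge>1. \<not> p dvd n \<longrightarrow> psi (Ej n) = phi (Ej n)"
    and f: "f \<in> U1"
  shows "psi f = phi f"
proof -
  have hpsi: "hom p psi" using char_hom[OF assms(3)] .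
  have all: "\<And>n. n \<ge> 1 \<Longrightarrow> psi (Ej n) = phi (Ej n)"
    using hom_Ej_all[OF assms(1,2) hpsi assms(4) assms(6)] by blast
  obtain N0 where N0: "\<forall>h\<in>U1. agree N0 f h \<longrightarrow> psi h = psi f"
    using char_locally_const[OF assms(3) f] by blast
  define N where "N = max N0 M"
  obtain a where a: "agree N f (\<Prod>n\<in>{1..<N}. Ej n ^ a n)" using gen_exists[OF assms(1,2)] f by blast
  define g where "g = (\<Prod>n\<in>{1..<N}. (Ej n :: 'a fps) ^ a n)"
  have EU: "\<forall>n\<in>{1..<N}. (Ej n :: 'a fps) ^ a n \<in> U1" by (auto intro!: U1_pow Ej_U1)
  have gU: "g \<in> U1" unfolding g_def by (rule prod_U1) (use EU in auto)
  have aN0: "agree N0 f g" using a unfolding g_def N_def by (rule agree_mono) simp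
  have aM: "agree M f g" using a unfolding g_def N_def by (rule agree_mono) simp
  have "psi g = psi f" using N0 gU aN0 by blast
  moreover have "phi g = phi f"
    by (rule hom_agree[OF assms(4) f gU aM assms(5)])
  moreover have "psi g = phi g"
  proof -
    have "psi g = (\<Sum>n\<in>{1..<N}. psi (Ej n ^ a n)) mod (int p ^ 2)"
      unfolding g_def using hom_prod[OF hpsi, of "{1..<N}" "\<lambda>n. Ej n ^ a n"] EU by simp
    also have "\<dots> = (\<Sum>n\<in>{1..<N}. phi (Ej n ^ a n)) mod (int p ^ 2)"
    proof -
      have "\<And>n. n \<in> {1..<N} \<Longrightarrow> psi (Ej n ^ a n) = phi (Ej n ^ a n)"
      proof -
        fix n assume n: "n \<in> {1..<N}"
        then have U: "(Ej n :: 'a fps) \<in> U1" using Ej_U1 by auto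
        show "psi (Ej n ^ a n) = phi (Ej n ^ a n)"
          unfolding hom_pow[OF hpsi U] hom_pow[OF assms(4) U] using all n by simp
      qed
      then have "(\<Sum>n\<in>{1..<N}. psi (Ej n ^ a n)) = (\<Sum>n\<in>{1..<N}. phi (Ej n ^ a n))"
        by (rule sum.cong[OF refl])
      then show ?thesis by simp
    qed
    also have "\<dots> = phi g"
      unfolding g_def using hom_prod[OF assms(4), of "{1..<N}" "\<lambda>n. Ej n ^ a n"] EU by simp
    finally show ?thesis .
  qed
  ultimately show ?thesis by simp
qed



lemma solve_nat:
  fixes a P r :: int
  assumes "coprime a P" "P > 0"
  shows "\<exists>c::nat. [a * int c = r] (mod P)"
proof -
  have "gcd a P dvd r" using assms(1) by simp
  then obtain x where x: "[a * x = r] (mod P)" using cong_solve_dvd_int by blast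
  have e: "int (nat (x mod P)) = x mod P" using assms(2) by simp
  have "[a * (x mod P) = a * x] (mod P)" by (simp add: cong_def mod_mult_right_eq)
  then have "[a * int (nat (x mod P)) = r] (mod P)" using x e cong_trans by metis
  then show ?thesis by blast
qed

lemma coprime_prod_prime:
  assumes "prime p" "\<not> p dvd J" "0 < mu" "mu < int p"
  shows "coprime (int J * mu) (int p)"
proof -
  have pi: "prime (int p)" using assms(1) by simp
  have "\<not> int p dvd int J" using assms(2) by simp
  then have c1: "coprime (int J) (int p)" using pi prime_imp_coprime coprime_commute by blast
  have "\<not> int p dvd mu" using assms(3,4) zdvd_not_zless by blast
  then have c2: "coprime mu (int p)" using pi prime_imp_coprime coprime_commute by blast
  show ?thesis using c1 c2 by simp
qed

lemma mod_sq_cong_p: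
  fixes a B :: int
  assumes "int p dvd B"
  shows "[(a + B) mod (int p ^ 2) = a] (mod int p)"
proof -
  have "[(a + B) mod (int p ^ 2) = a + B] (mod int p)"
    by (simp add: cong_def mod_mod_cancel power2_eq_square)
  moreover have "[a + B = a] (mod int p)" using assms by (auto simp: cong_def)
  ultimately show ?thesis using cong_trans by blast
qed

lemma agree_compose_self:
  fixes v :: "'a::field fps"
  assumes "v \<in> Uj k" "1 \<le> i"
  shows "agree (k+i) (Ej i) (Ej i oo (fps_X * v))"
proof -
  have "agree k (v^i) 1" using Uj_pow[OF assms(1)] by (simp add: Uj_iff)
  then have "agree (k+i) (fps_X^i * v^i) (fps_X^i * 1)" by (rule agree_Xpow)
  then have "agree (k+i) (1 + fps_X^i * v^i) (1 + fps_X^i)" using agree_add[OF agree_refl] by simp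
  then show ?thesis unfolding Ej_compose by (simp add: Ej_def agree_sym)
qed

lemma step:
  fixes chi :: "'a::{field,finite} fps \<Rightarrow> int" and xl :: "nat \<Rightarrow> int"
  assumes pr: "prime p" and card: "CARD('a) = p" and hc: "hom p chi"
    and kill: "\<forall>h\<in>Uj (m+1). chi h = 0"
    and pdiv: "\<forall>h\<in>Uj (l+1). int p dvd chi h"
    and Em: "chi (Ej m) \<noteq> 0"
    and J: "1 \<le> J" "l + J < m" "\<not> p dvd J"
    and w0: "w0 \<in> U1" "chi w0 = 0"
    and modp: "\<forall>i\<ge>1. \<not> p dvd i \<longrightarrow> [chi (Ej i oo (fps_X*w0)) = xl i] (mod int p)"
    and t: "[t = xl J] (mod int p)" "0 \<le> t" "t < int p ^ 2"
  shows "\<exists>w1\<in>U1. chi w1 = 0 \<and>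
           (\<forall>i\<ge>1. \<not> p dvd i \<longrightarrow> [chi (Ej i oo (fps_X*w1)) = xl i] (mod int p)) \<and>
           chi (Ej J oo (fps_X*w1)) = t \<and>
           (\<forall>i>J. chi (Ej i oo (fps_X*w1)) = chi (Ej i oo (fps_X*w0)))"
proof -
  define q where "q = int p ^ 2"
  have p1: "p > 1" using pr prime_gt_1_nat by blast
  define W where "W = fps_X * w0"
  have W0: "W $ 0 = 0" unfolding W_def by simp
  define phi where "phi = (\<lambda>f. chi (f oo W))"
  have hphi: "hom p phi" unfolding phi_def by (rule hom_compose[OF hc W0])
  have killphi: "\<forall>h\<in>Uj (m+1). phi h = 0" unfolding phi_def using kill compose_Uj by blast
  have pdivphi: "\<forall>h\<in>Uj (l+1). int p dvd phi h" unfolding phi_def using pdiv compose_Uj by blast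
  define k where "k = m - J"
  have k: "k > l" "k \<ge> 1" "J + k = m" "k + 1 \<le> m" using J unfolding k_def by auto
  have m1: "m \<ge> 1" using J by simp
  have EmU: "(Ej m :: 'a fps) \<in> U1" using Ej_U1 m1 by blast
  have phiEm: "phi (Ej m) = chi (Ej m)"
  proof -
    have "w0 \<in> Uj 1" using w0(1) by (simp add: Uj_iff U1_iff agree_def)
    then have "agree (1+m) (Ej m) (Ej m oo W)" unfolding W_def by (rule agree_compose_self[OF _ m1])
    then have "chi (Ej m oo W) = chi (Ej m)"
      using hom_agree[OF hc EmU compose_U1[OF EmU], of "m+1"] kill by (simp add: add.commute)
    then show ?thesis unfolding phi_def .
  qed
  define mu where "mu = chi (Ej m)"
  have mu_r: "0 \<le> mu" "mu < q" using hom_range[OF hc EmU] unfolding mu_def q_def by auto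
  have "Ej m \<in> Uj (l+1)" using Ej_Uj[OF m1] Uj_mono k by (metis Suc_eq_plus1 Suc_leI le_trans less_imp_le_nat J(2) le_add1 add_less_cancel_left)
  then have "int p dvd mu" using pdiv unfolding mu_def by blast
  then obtain mu' where mu': "mu = int p * mu'" by blast
  have mu'_r: "0 < mu'" "mu' < int p"
  proof -
    have "mu \<noteq> 0" using Em unfolding mu_def .
    then have "mu > 0" using mu_r by simp
    then show "0 < mu'" using mu' p1 by (simp add: zero_less_mult_iff)
    have "int p * mu' < int p * int p" using mu_r mu' unfolding q_def by (simp add: power2_eq_square)
    then show "mu' < int p" using p1 by simp
  qed
  have cop: "coprime (int J * mu') (int p)" using coprime_prod_prime[OF pr J(3) mu'_r] .
  have EkU: "(Ej k :: 'a fps) \<in> U1" using Ej_U1 k by blast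
  have EJU: "(Ej J :: 'a fps) \<in> U1" using Ej_U1 J by blast
  have "Ej k \<in> Uj (l+1)" using Ej_Uj[of k] Uj_mono k by (metis Suc_eq_plus1 Suc_leI)
  then have "int p dvd phi (Ej k)" using pdivphi by blast
  then obtain e where e: "phi (Ej k) = int p * e" by blast
  have "[phi (Ej J) = xl J] (mod int p)" using modp J unfolding phi_def W_def by blast
  then have "[t = phi (Ej J)] (mod int p)" using t(1) by (meson cong_sym cong_trans)
  then have "int p dvd t - phi (Ej J)" by (simp add: cong_iff_dvd_diff)
  then obtain r where r: "t - phi (Ej J) = int p * r" by blast
  obtain c :: nat where c: "[int J * mu' * int c = r] (mod int p)"
    using solve_nat[OF cop] p1 by auto
  have copmu: "coprime mu' (int p)" using cop by simp
  obtain c' :: nat where c': "[mu' * int c' = - (int c * e)] (mod int p)"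
    using solve_nat[OF copmu] p1 by auto
  define v0 where "v0 = (Ej k :: 'a fps) ^ c * Ej m ^ c'"
  have v0k: "v0 \<in> Uj k" unfolding v0_def
    by (intro Uj_mult Uj_pow Ej_Uj[OF k(2)]) (rule Uj_mono[OF Ej_Uj[OF m1]], use k in simp)
  have v0U: "v0 \<in> U1" using Uj_U1[OF v0k] .
  have EmU': "(Ej m :: 'a fps) ^ c' \<in> U1" by (rule U1_pow[OF EmU])
  have EkU': "(Ej k :: 'a fps) ^ c \<in> U1" by (rule U1_pow[OF EkU])
  have phiv0: "phi v0 = 0"
  proof -
    have "phi v0 = (phi (Ej k ^ c) + phi (Ej m ^ c')) mod q"
      unfolding v0_def q_def using hom_mult[OF hphi EkU' EmU'] .
    also have "\<dots> = ((int c * phi (Ej k)) mod q + (int c' * mu) mod q) mod q"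
      unfolding q_def hom_pow[OF hphi EkU] hom_pow[OF hphi EmU] phiEm mu_def ..
    also have "\<dots> = (int p * (int c * e + mu' * int c')) mod q"
      unfolding e mu' by (simp add: mod_add_eq algebra_simps)
    also have "\<dots> = 0"
    proof -
      have "int p dvd (int c * e + mu' * int c')" using c' by (simp add: cong_iff_dvd_diff algebra_simps)
      then obtain s where "int c * e + mu' * int c' = int p * s" by blast
      then show ?thesis unfolding q_def by (simp add: power2_eq_square)
    qed
    finally show ?thesis .
  qed
  define w1 where "w1 = w0 * (v0 oo W)"
  have w1U: "w1 \<in> U1" unfolding w1_def using w0(1) compose_U1[OF v0U] U1_mult by blast
  have w1chi: "chi w1 = 0"
  proof -
    have "chi w1 = (chi w0 + chi (v0 oo W)) mod q" unfolding w1_def q_def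
      using hom_mult[OF hc w0(1) compose_U1[OF v0U]] .
    then show ?thesis using w0(2) phiv0 unfolding phi_def by simp
  qed
  define V where "V = fps_X * v0"
  have V0: "V $ 0 = 0" unfolding V_def by simp
  have XW: "fps_X * w1 = V oo W" unfolding w1_def V_def W_def by (rule compose_chain[symmetric])
  have key: "\<And>i. chi (Ej i oo (fps_X * w1)) = phi (Ej i oo V)"
    unfolding XW phi_def using fps_compose_assoc[OF W0 V0] by simp
  have agr: "\<And>i. 1 \<le> i \<Longrightarrow> agree (k+i) (Ej i) (Ej i oo V)"
    unfolding V_def using agree_compose_self[OF v0k] by blast
  have big: "\<forall>i>J. chi (Ej i oo (fps_X*w1)) = chi (Ej i oo (fps_X*w0))"
  proof (intro allI impI)
    fix i assume i: "J < i"
    then have i1: "1 \<le> i" using J by simp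
    have EiU: "(Ej i :: 'a fps) \<in> U1" using Ej_U1 i1 by blast
    have "agree (m+1) (Ej i) (Ej i oo V)" using agr[OF i1] by (rule agree_mono) (use i k in simp)
    then have "phi (Ej i oo V) = phi (Ej i)"
      using hom_agree[OF hphi EiU compose_U1[OF EiU]] killphi by blast
    then show "chi (Ej i oo (fps_X*w1)) = chi (Ej i oo (fps_X*w0))" unfolding key phi_def W_def by simp
  qed
  have mp: "\<forall>i\<ge>1. \<not> p dvd i \<longrightarrow> [chi (Ej i oo (fps_X*w1)) = xl i] (mod int p)"
  proof (intro allI impI)
    fix i assume i1: "1 \<le> i" and np: "\<not> p dvd i"
    have EiU: "(Ej i :: 'a fps) \<in> U1" using Ej_U1 i1 by blast
    have "agree (l+1) (Ej i) (Ej i oo V)" using agr[OF i1] by (rule agree_mono) (use i1 k in simp)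
    then have "[phi (Ej i oo V) = phi (Ej i)] (mod int p)"
      using hom_agree_modp[OF hphi EiU compose_U1[OF EiU]] pdivphi by blast
    moreover have "[phi (Ej i) = xl i] (mod int p)" using modp i1 np unfolding phi_def W_def by blast
    ultimately show "[chi (Ej i oo (fps_X*w1)) = xl i] (mod int p)" unfolding key using cong_trans by blast
  qed
  have atJ: "chi (Ej J oo (fps_X*w1)) = t"
  proof -
    define C where "C = fps_const (of_nat (c * J) :: 'a)"
    have A1: "agree (k+1) (v0^J) (1 + C * fps_X^k)"
    proof -
      have "v0^J = Ej k ^ (c*J) * Ej m ^ (c'*J)" unfolding v0_def by (simp add: power_mult_distrib power_mult)
      moreover have "agree (k+1) (Ej k ^ (c*J)) (1 + C * fps_X^k)" unfolding C_def using Ej_pow_agree k(2) by blast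
      moreover have "agree (k+1) ((Ej m :: 'a fps) ^ (c'*J)) 1"
      proof -
        have "(Ej m :: 'a fps) ^ (c'*J) \<in> Uj m" using Uj_pow Ej_Uj m1 by blast
        then have "agree m ((Ej m :: 'a fps) ^ (c'*J)) 1" by (simp add: Uj_iff)
        then show ?thesis using k(4) by (rule agree_mono)
      qed
      ultimately show ?thesis using agree_mult by fastforce
    qed
    have "agree (k+1+J) (fps_X^J * v0^J) (fps_X^J * (1 + C * fps_X^k))" using agree_Xpow[OF A1] .
    moreover have "k+1+J = m+1" using k(3) by simp
    ultimately have X: "agree (m+1) (fps_X^J * v0^J) (fps_X^J * (1 + C * fps_X^k))" by simp
    have "agree (m+1) (1 + fps_X^J * v0^J) (1 + fps_X^J * (1 + C * fps_X^k))"
      by (rule agree_add[OF agree_refl X])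
    then have A: "agree (m+1) (Ej J oo V) (1 + fps_X^J * (1 + C * fps_X^k))"
      unfolding V_def Ej_compose .
    have B: "agree (m+1) (Ej J * Ej m ^ (c*J)) (Ej J * (1 + C * fps_X^m))"
      unfolding C_def by (rule agree_mult[OF agree_refl Ej_pow_agree[OF m1]])
    have Ceq: "Ej J * (1 + C * fps_X^m) = (1 + fps_X^J * (1 + C * fps_X^k)) + fps_X^(J+m) * C"
      using k(3) by (simp add: Ej_def algebra_simps power_add[symmetric])
    have "agree (m+1) (Ej J * (1 + C * fps_X^m)) (1 + fps_X^J * (1 + C * fps_X^k))"
      unfolding Ceq by (rule agree_Xpow_high) (use J in simp)
    then have AB: "agree (m+1) (Ej J * Ej m ^ (c*J)) (Ej J oo V)"
      using B A agree_trans agree_sym by metis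
    have EJmU: "(Ej J :: 'a fps) * Ej m ^ (c*J) \<in> U1" by (rule U1_mult[OF EJU U1_pow[OF EmU]])
    have "phi (Ej J oo V) = phi (Ej J * Ej m ^ (c*J))"
      using hom_agree[OF hphi EJmU compose_U1[OF EJU] AB] killphi by blast
    also have "\<dots> = (phi (Ej J) + (int (c*J) * mu) mod q) mod q"
      unfolding q_def hom_mult[OF hphi EJU U1_pow[OF EmU]] hom_pow[OF hphi EmU] phiEm mu_def ..
    also have "\<dots> = (phi (Ej J) + int (c*J) * mu) mod q" by (simp add: mod_add_right_eq)
    also have "\<dots> = t"
    proof -
      have "int p dvd int J * mu' * int c - r" using c by (simp add: cong_iff_dvd_diff cong_sym_eq)
      then obtain s where s: "int J * mu' * int c - r = int p * s" by blast
      have s': "int J * mu' * int c = r + int p * s" using s by simp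
      have "phi (Ej J) + int (c*J) * mu = phi (Ej J) + int p * (int J * mu' * int c)"
        unfolding mu' by (simp add: algebra_simps)
      also have "\<dots> = phi (Ej J) + int p * r + int p * int p * s" unfolding s' by (simp add: algebra_simps)
      also have "\<dots> = t + q * s" using r unfolding q_def by (simp add: algebra_simps power2_eq_square)
      finally have "phi (Ej J) + int (c*J) * mu = t + q * s" .
      then show ?thesis using t(2,3) unfolding q_def by simp
    qed
    finally show ?thesis unfolding key .
  qed
  show ?thesis using w1U w1chi mp atJ big by blast
qed



lemma Em_nonzero:
  fixes chi :: "'a::{field,finite} fps \<Rightarrow> int"
  assumes pr: "prime p" and card: "CARD('a) = p" and hc: "hom p chi"
    and kill: "\<forall>h\<in>Uj (m+1). chi h = 0"
    and ex: "\<exists>f\<in>Uj m. chi f \<noteq> 0" and m1: "1 \<le> m"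
  shows "chi (Ej m) \<noteq> 0"
proof
  assume z: "chi (Ej m) = 0"
  obtain f where f: "f \<in> Uj m" "chi f \<noteq> 0" using ex by blast
  obtain c where c: "(of_nat c :: 'a) = f $ m" using of_nat_surj[OF pr card] by blast
  have A: "agree (m+1) ((Ej m :: 'a fps) ^ c) (1 + fps_const (of_nat c) * fps_X^m)"
    using Ej_pow_agree[OF m1] .
  have B: "agree (m+1) f (1 + fps_const (of_nat c) * fps_X^m)"
    unfolding agree_def
  proof (intro allI impI)
    fix i assume i: "i < m+1"
    show "f $ i = (1 + fps_const (of_nat c) * fps_X^m) $ i"
    proof (cases "i = m")
      case True then show ?thesis using c m1 by simp
    next
      case False
      then have "i < m" using i by simp
      then show ?thesis using f(1) m1 unfolding Uj_def by auto
    qed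
  qed
  have fU: "f \<in> U1" using Uj_U1[OF f(1)] .
  have EU: "(Ej m :: 'a fps) ^ c \<in> U1" using U1_pow Ej_U1 m1 by blast
  have "chi f = chi (Ej m ^ c)"
    using hom_agree[OF hc EU fU, of "m+1"] A B kill agree_trans agree_sym by metis
  also have "\<dots> = 0" using hom_pow[OF hc Ej_U1[OF m1]] z by simp
  finally show False using f(2) by simp
qed

theorem proposition4p2:
  fixes chi psi :: "'a::{field,finite} fps \<Rightarrow> int"
    and p l m :: nat and x :: int and b :: "nat \<Rightarrow> int"
  assumes "prime p" and "CARD('a) = p"
    and "has_type p chi l m"
    and "x \<in> {0..<int p}" and "\<forall>j. b j \<in> {0..<int p}"
    and "\<forall>i\<ge>1. \<not> p dvd i \<longrightarrow>
           chi (Ej i) = ((if i = l then x else 0)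
                       + (if i \<le> m then b i * int p else 0)) mod (int p ^ 2)"
    and "is_character p psi"
    and "\<forall>i\<ge>1. \<not> p dvd i \<longrightarrow>
           psi (Ej i) = ((if i = l then x else 0)
                       + (if m - l \<le> i \<and> i \<le> m then b i * int p else 0)) mod (int p ^ 2)"
  shows "strictly_equivalent chi psi"
proof -
  note pr = assms(1) and card = assms(2)
  have p1: "p > 1" using pr prime_gt_1_nat by blast
  define q where "q = int p ^ 2"
  have q0: "q > 0" unfolding q_def using p1 by simp
  define xl where "xl i = (if i = l then x else 0)" for i :: nat
  define T where "T i = ((if i = l then x else 0)
                       + (if m - l \<le> i \<and> i \<le> m then b i * int p else 0)) mod (int p ^ 2)" for i :: nat
  have ischi: "is_character p chi" using assms(3) unfolding has_type_def by blast
  have hc: "hom p chi" using char_hom[OF ischi] .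
  have kill: "\<forall>h\<in>Uj (m+1). chi h = 0" using assms(3) unfolding has_type_def by auto
  have pdiv: "\<forall>h\<in>Uj (l+1). int p dvd chi h" using assms(3) unfolding has_type_def by auto
  have exm: "\<exists>f\<in>Uj m. chi f \<noteq> 0" using assms(3) unfolding has_type_def by blast
  define Q where "Q J \<longleftrightarrow> (\<exists>w0\<in>U1. chi w0 = 0 \<and>
      (\<forall>i\<ge>1. \<not> p dvd i \<longrightarrow> [chi (Ej i oo (fps_X*w0)) = xl i] (mod int p)) \<and>
      (\<forall>i\<ge>1. \<not> p dvd i \<longrightarrow> J \<le> i \<longrightarrow> chi (Ej i oo (fps_X*w0)) = T i))" for J
  have base: "Q (m - l)"
    unfolding Q_def
  proof (intro bexI[of _ 1] conjI allI impI)
    show "(1::'a fps) \<in> U1" by (simp add: U1_iff)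
    show "chi 1 = 0" using hom_one[OF hc] .
  next
    fix i :: nat assume i: "1 \<le> i" "\<not> p dvd i"
    have "chi (Ej i) = (xl i + (if i \<le> m then b i * int p else 0)) mod (int p ^ 2)"
      using assms(6) i unfolding xl_def by blast
    moreover have "int p dvd (if i \<le> m then b i * int p else 0)" by simp
    ultimately show "[chi (Ej i oo (fps_X * 1)) = xl i] (mod int p)"
      using mod_sq_cong_p by simp
  next
    fix i :: nat assume i: "1 \<le> i" "\<not> p dvd i" "m - l \<le> i"
    show "chi (Ej i oo (fps_X * 1)) = T i"
      using assms(6) i unfolding T_def by auto
  qed
  have "Q 0"
  proof (rule inc_induct[of 0 "m - l" Q])
    show "Q (m - l)" by (rule base)
  next
    fix n assume n: "0 \<le> n" "n < m - l" and IH: "Q (Suc n)"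
    obtain w0 where w0: "w0 \<in> U1" "chi w0 = 0"
      "\<forall>i\<ge>1. \<not> p dvd i \<longrightarrow> [chi (Ej i oo (fps_X*w0)) = xl i] (mod int p)"
      "\<forall>i\<ge>1. \<not> p dvd i \<longrightarrow> Suc n \<le> i \<longrightarrow> chi (Ej i oo (fps_X*w0)) = T i"
      using IH unfolding Q_def by blast
    show "Q n"
    proof (cases "n = 0 \<or> p dvd n")
      case True
      have "\<forall>i\<ge>1. \<not> p dvd i \<longrightarrow> n \<le> i \<longrightarrow> chi (Ej i oo (fps_X*w0)) = T i"
      proof (intro allI impI)
        fix i assume i: "1 \<le> i" "\<not> p dvd i" "n \<le> i"
        have "Suc n \<le> i"
        proof (cases "n = 0")
          case True then show ?thesis using i by simp
        next
          case False then have "i \<noteq> n" using \<open>n = 0 \<or> p dvd n\<close> i by auto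
          then show ?thesis using i by simp
        qed
        then show "chi (Ej i oo (fps_X*w0)) = T i" using w0(4) i by blast
      qed
      then show ?thesis unfolding Q_def using w0 by blast
    next
      case False
      then have J: "1 \<le> n" "l + n < m" "\<not> p dvd n" using n by auto
      have m1: "1 \<le> m" using J by simp
      have Em: "chi (Ej m) \<noteq> 0" using Em_nonzero[OF pr card hc kill exm m1] .
      have Tn: "T n = (xl n + 0) mod (int p ^ 2)" unfolding T_def xl_def using J by auto
      have t1: "[T n = xl n] (mod int p)" unfolding Tn by (rule mod_sq_cong_p) simp
      have t2: "0 \<le> T n" "T n < int p ^ 2" unfolding T_def using p1 by auto
      obtain w1 where w1: "w1 \<in> U1" "chi w1 = 0"
        "\<forall>i\<ge>1. \<not> p dvd i \<longrightarrow> [chi (Ej i oo (fps_X*w1)) = xl i] (mod int p)"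
        "chi (Ej n oo (fps_X*w1)) = T n"
        "\<forall>i>n. chi (Ej i oo (fps_X*w1)) = chi (Ej i oo (fps_X*w0))"
        using step[OF pr card hc kill pdiv Em J w0(1,2) w0(3) t1 t2] by blast
      have "\<forall>i\<ge>1. \<not> p dvd i \<longrightarrow> n \<le> i \<longrightarrow> chi (Ej i oo (fps_X*w1)) = T i"
      proof (intro allI impI)
        fix i assume i: "1 \<le> i" "\<not> p dvd i" "n \<le> i"
        show "chi (Ej i oo (fps_X*w1)) = T i"
        proof (cases "i = n")
          case True then show ?thesis using w1(4) by simp
        next
          case False
          then have "n < i" "Suc n \<le> i" using i by auto
          then show ?thesis using w1(5) w0(4) i by simp
        qed
      qed
      then show ?thesis unfolding Q_def using w1 by blast
    qed
  qed simp
  then obtain w0 where w0: "w0 \<in> U1" "chi w0 = 0"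
      "\<forall>i\<ge>1. \<not> p dvd i \<longrightarrow> chi (Ej i oo (fps_X*w0)) = T i"
    unfolding Q_def by auto
  define u where "u = fps_X * w0"
  have u0: "u $ 0 = 0" unfolding u_def by simp
  have unot: "u \<in> nottingham" unfolding nottingham_def u_def using w0(1) by (simp add: U1_iff)
  have ushift: "fps_shift 1 u = w0" unfolding u_def using fps_shift_times_fps_X'[of w0] by (simp only: mult.commute)
  have hphi: "hom p (\<lambda>f. chi (f oo u))" by (rule hom_compose[OF hc u0])
  have killphi: "\<forall>h\<in>Uj (m+1). chi (h oo u) = 0" using kill compose_Uj by blast
  have agreeE: "\<forall>n\<ge>1. \<not> p dvd n \<longrightarrow> psi (Ej n) = chi (Ej n oo u)"
    using assms(8) w0(3) unfolding T_def u_def by auto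
  have "\<forall>f\<in>U1. psi f = nott_act u chi f"
    unfolding nott_act_def using density[OF pr card assms(7) hphi killphi agreeE] by blast
  then show ?thesis unfolding strictly_equivalent_def using unot ushift w0(2) by blast
qed


end
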